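(* Let $k\ge2$ be an even integer. In the maximum-cardinality online matching problem under edge arrivals with a hard budget of $k$ reassignments per arrival (defined in the context), the shortest-augmenting-path algorithm described in the context is $(1-\frac{2}{k+2})$-competitive: on every instance, the matching it outputs has cardinality at least $(1-\frac{2}{k+2})\cdot\mathsf{OPT}$, where $\mathsf{OPT}$ is the maximum cardinality of a matching in the revealed graph.
   Context: Problem: $G=(V,E)$ is a graph, not necessarily bipartite. The algorithm initially knows $V$ and $k$. Over $|E|$ timesteps the edges of $G$ are revealed one at a time. At the end of each timestep the algorithm must output a matching in the graph revealed so far. The new matching $M_2$ must be obtainable from the previous matching $M_1$ (empty before the first timestep) by at most $k$ (re)assignments, the number of (re)assignments being the number of vertices of nonzero degree in $M_1\triangle M_2$; once a vertex is matched it must remain matched at all later timesteps. An augmenting path with respect to a matching $M$ is a path between two distinct vertices not covered by $M$ whose edges alternate between edges not in $M$ and edges in $M$; its length is its number of edges. Algorithm: when an edge $e$ arrives, among all augmenting paths in the current graph with respect to the current matching $M$ that contain $e$, choose a shortest one $P$; if none exists or its length exceeds $k-1$, keep $M$; otherwise output $M\triangle P$. *)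

theory Defs
  imports Complex_Main
begin

text \<open>Undirected edges are 2-element vertex sets; a graph is given by its edge set.\<close>

definition matching :: "'a set set \<Rightarrow> bool" where
  "matching M \<longleftrightarrow> (\<forall>e\<in>M. \<forall>f\<in>M. e \<noteq> f \<longrightarrow> e \<inter> f = {})"

definition matching_in :: "'a set set \<Rightarrow> 'a set set \<Rightarrow> bool" where
  "matching_in G M \<longleftrightarrow> M \<subseteq> G \<and> matching M"

definition OPT :: "'a set set \<Rightarrow> nat" where
  "OPT G = Max {card M | M. matching_in G M}"

fun path_edges :: "'a list \<Rightarrow> 'a set set" where
  "path_edges [] = {}"
| "path_edges [x] = {}"
| "path_edges (x # y # xs) = insert {x, y} (path_edges (y # xs))"

definition path_len :: "'a list \<Rightarrow> nat" where
  "path_len p = length p - 1"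

definition augmenting_path :: "'a set set \<Rightarrow> 'a set set \<Rightarrow> 'a list \<Rightarrow> bool" where
  "augmenting_path G M p \<longleftrightarrow>
     distinct p \<and> length p \<ge> 2 \<and>
     (\<forall>i < length p - 1. {p ! i, p ! Suc i} \<in> G \<and> ({p ! i, p ! Suc i} \<in> M \<longleftrightarrow> odd i)) \<and>
     hd p \<notin> \<Union>M \<and> last p \<notin> \<Union>M"

text \<open>One step of the algorithm: G is the graph revealed so far (already containing the
  new edge e), M the current matching, M' the output. Ties between shortest paths are
  broken arbitrarily (all choices are allowed).\<close>
definition alg_step :: "nat \<Rightarrow> 'a set set \<Rightarrow> 'a set set \<Rightarrow> 'a set \<Rightarrow> 'a set set \<Rightarrow> bool" where
  "alg_step k G M e M' \<longleftrightarrow>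
     (let P = {p. augmenting_path G M p \<and> e \<in> path_edges p} in
       ((\<forall>p\<in>P. path_len p > k - 1) \<and> M' = M)
       \<or> (\<exists>p\<in>P. (\<forall>q\<in>P. path_len p \<le> path_len q) \<and> path_len p \<le> k - 1
               \<and> M' = M - path_edges p \<union> (path_edges p - M)))"

inductive alg_run :: "nat \<Rightarrow> 'a set list \<Rightarrow> 'a set set \<Rightarrow> bool" where
  init: "alg_run k [] {}"
| step: "alg_run k es M \<Longrightarrow> alg_step k (set (es @ [e])) M e M' \<Longrightarrow> alg_run k (es @ [e]) M'"

end

theory Submission
  imports Defs
begin


fun alt :: "bool \<Rightarrow> 'a set set \<Rightarrow> 'a set set \<Rightarrow> 'a list \<Rightarrow> bool" where
  "alt c M N (x # y # xs) = ((if c then {x,y} \<in> N - M else {x,y} \<in> M - N) \<and> alt (\<not>c) M N (y # xs))"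
| "alt c M N _ = True"

definition twoset :: "'a set \<Rightarrow> bool" where
  "twoset e \<longleftrightarrow> (\<exists>u v. e = {u,v} \<and> u \<noteq> v)"

lemma len2: "2 \<le> length p \<Longrightarrow> \<exists>a b q. p = a # b # q"
  by (cases p; cases "tl p") auto

lemma match_eq: "matching M \<Longrightarrow> e \<in> M \<Longrightarrow> f \<in> M \<Longrightarrow> x \<in> e \<Longrightarrow> x \<in> f \<Longrightarrow> e = f"
  unfolding matching_def by blast

lemma matching_subset: "matching M \<Longrightarrow> M' \<subseteq> M \<Longrightarrow> matching M'"
  unfolding matching_def by blast

lemma pe_sub: "e \<in> path_edges p \<Longrightarrow> e \<subseteq> set p"
  by (induction p rule: path_edges.induct) auto

lemma finite_pe: "finite (path_edges p)"
  by (induction p rule: path_edges.induct) auto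

lemma pe_first: "distinct (v#y#ys) \<Longrightarrow> e \<in> path_edges (v#y#ys) \<Longrightarrow> v \<in> e \<Longrightarrow> e = {v,y}"
  using pe_sub[of e "y#ys"] by auto

lemma card_pe: "distinct p \<Longrightarrow> card (path_edges p) = length p - 1"
proof (induction p rule: path_edges.induct)
  case (3 x y xs)
  have "{x,y} \<notin> path_edges (y#xs)" using pe_sub[of "{x,y}" "y#xs"] 3(2) by auto
  then show ?case using 3 finite_pe[of "y#xs"] by simp
qed auto

lemma alt_sub: "alt c M N p \<Longrightarrow> path_edges p \<subseteq> (M - N) \<union> (N - M)"
  by (induction c M N p rule: alt.induct) (auto split: if_splits)

lemma alt_mono: "alt c M' N' p \<Longrightarrow> N' - M' \<subseteq> N - M \<Longrightarrow> M' - N' \<subseteq> M - N \<Longrightarrow> alt c M N p"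
  by (induction c M' N' p rule: alt.induct) (auto split: if_splits)

lemma alt_interior: "alt c M N p \<Longrightarrow> z \<in> set p \<Longrightarrow> z \<noteq> hd p \<Longrightarrow> z \<noteq> last p \<Longrightarrow>
   (\<exists>e\<in>path_edges p. e \<in> M - N \<and> z \<in> e) \<and> (\<exists>e\<in>path_edges p. e \<in> N - M \<and> z \<in> e)"
proof (induction c M N p rule: alt.induct)
  case (1 c M N x y xs)
  show ?case
  proof (cases "z = y")
    case True
    then obtain w ws where xs: "xs = w # ws" using 1 by (cases xs) auto
    have "(if c then {x,y} \<in> N - M else {x,y} \<in> M - N)" "(if \<not>c then {y,w} \<in> N - M else {y,w} \<in> M - N)"
      using 1(2) xs by auto
    then show ?thesis using True xs by (cases c) auto
  next
    case False
    then have "(\<exists>e\<in>path_edges (y#xs). e \<in> M - N \<and> z \<in> e) \<and> (\<exists>e\<in>path_edges (y#xs). e \<in> N - M \<and> z \<in> e)"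
      using 1 by auto
    then show ?thesis by auto
  qed
qed auto

lemma alt_vertex: "distinct p \<Longrightarrow> alt c M N p \<Longrightarrow> e1 \<in> path_edges p \<Longrightarrow> e2 \<in> path_edges p \<Longrightarrow>
   z \<in> e1 \<Longrightarrow> z \<in> e2 \<Longrightarrow> e1 \<noteq> e2 \<Longrightarrow> (e1 \<in> M \<longleftrightarrow> e2 \<notin> M)"
proof (induction c M N p arbitrary: e1 e2 rule: alt.induct)
  case (1 c M N x y xs)
  have key: "a \<in> M \<longleftrightarrow> b \<notin> M" if a: "a = {x,y}" and b: "b \<in> path_edges (y#xs)" and za: "z \<in> a" and zb: "z \<in> b" for a b
  proof -
    have "z \<in> set (y#xs)" using pe_sub[OF b] zb by auto
    then have "z = y" using za a 1(2) by auto
    then obtain w ws where xs: "xs = w # ws" using b by (cases xs) auto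
    have "b = {y,w}" using pe_first[of y w ws b] 1(2) b xs \<open>z = y\<close> zb by auto
    have "(if c then {x,y} \<in> N - M else {x,y} \<in> M - N)" "(if \<not>c then {y,w} \<in> N - M else {y,w} \<in> M - N)"
      using 1(3) xs by auto
    then show ?thesis using a \<open>b = {y,w}\<close> by (cases c) auto
  qed
  have d: "distinct (y#xs)" using 1(2) by simp
  have a: "alt (\<not>c) M N (y#xs)" using 1(3) by simp
  have pe: "path_edges (x#y#xs) = insert {x,y} (path_edges (y#xs))" by simp
  show ?case
  proof (cases "e1 = {x,y}")
    case True
    then have "e2 \<in> path_edges (y#xs)" using 1(5,8) pe by blast
    then show ?thesis using key[OF True _ 1(6) 1(7)] by blast
  next
    case False
    then have e1: "e1 \<in> path_edges (y#xs)" using 1(4) pe by blast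
    show ?thesis
    proof (cases "e2 = {x,y}")
      case True
      then show ?thesis using key[OF True e1 1(7) 1(6)] by blast
    next
      case False
      then have "e2 \<in> path_edges (y#xs)" using 1(5) pe by blast
      then show ?thesis using 1(1)[OF d a e1 _ 1(6) 1(7) 1(8)] by blast
    qed
  qed
qed auto

lemma alt_count: "distinct p \<Longrightarrow> alt c M N p \<Longrightarrow>
   card (path_edges p \<inter> (N - M)) = (if c then length p div 2 else (length p - 1) div 2) \<and>
   card (path_edges p \<inter> (M - N)) = (if c then (length p - 1) div 2 else length p div 2)"
proof (induction c M N p rule: alt.induct)
  case (1 c M N x y xs)
  have nin: "{x,y} \<notin> path_edges (y#xs)" using pe_sub[of "{x,y}" "y#xs"] 1(2) by auto
  have eq: "path_edges (x#y#xs) \<inter> S = (if {x,y} \<in> S then insert {x,y} (path_edges (y#xs) \<inter> S) else path_edges (y#xs) \<inter> S)" for S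
    by auto
  have fin: "finite (path_edges (y#xs) \<inter> S)" for S using finite_pe by auto
  have IH: "card (path_edges (y#xs) \<inter> (N - M)) = (if \<not>c then length (y#xs) div 2 else (length (y#xs) - 1) div 2) \<and>
   card (path_edges (y#xs) \<inter> (M - N)) = (if \<not>c then (length (y#xs) - 1) div 2 else length (y#xs) div 2)"
    using 1 by auto
  have t: "(if c then {x,y} \<in> N - M else {x,y} \<in> M - N)" using 1 by auto
  show ?case
  proof (cases c)
    case True
    then have "{x,y} \<in> N - M" "{x,y} \<notin> M - N" using t by auto
    then show ?thesis using IH True eq[of "N-M"] eq[of "M-N"] nin fin by simp
  next
    case False
    then have "{x,y} \<notin> N - M" "{x,y} \<in> M - N" using t by auto
    then show ?thesis using IH False eq[of "N-M"] eq[of "M-N"] nin fin by simp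
  qed
qed auto



lemma all_nat_split: "(\<forall>i::nat. P i) = (P 0 \<and> (\<forall>j. P (Suc j)))"
  by (metis not0_implies_Suc)

lemma ex_nat_split: "(\<exists>i::nat. P i) = (P 0 \<or> (\<exists>j. P (Suc j)))"
  by (metis not0_implies_Suc)

lemma pe_nth: "e \<in> path_edges p \<longleftrightarrow> (\<exists>i. Suc i < length p \<and> e = {p!i, p!Suc i})"
proof (induction p rule: path_edges.induct)
  case (3 x y xs)
  show ?case
    apply (subst ex_nat_split)
    using 3 by auto
qed auto

lemma alt_nth: "alt c M N p \<longleftrightarrow> (\<forall>i. Suc i < length p \<longrightarrow>
    (if c = even i then {p!i, p!Suc i} \<in> N - M else {p!i, p!Suc i} \<in> M - N))"
proof (induction c M N p rule: alt.induct)
  case (1 c M N x y xs)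
  show ?case
    apply (subst all_nat_split)
    using 1 by auto
qed auto

definition good :: "'a set set \<Rightarrow> 'a set set \<Rightarrow> 'a list \<Rightarrow> bool" where
  "good M N q \<longleftrightarrow> distinct q \<and> alt True M N q \<and> even (length q) \<and> 2 \<le> length q \<and> hd q \<notin> \<Union>M \<and> last q \<notin> \<Union>M"

lemma good_aug: "good M N q \<Longrightarrow> M \<union> N \<subseteq> G \<Longrightarrow> augmenting_path G M q"
proof -
  assume g: "good M N q" and G: "M \<union> N \<subseteq> G"
  have g': "distinct q" "alt True M N q" "2 \<le> length q" "hd q \<notin> \<Union>M" "last q \<notin> \<Union>M"
    using g unfolding good_def by auto
  have all: "\<forall>i. Suc i < length q \<longrightarrow> (if True = even i then {q!i, q!Suc i} \<in> N - M else {q!i, q!Suc i} \<in> M - N)"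
    using alt_nth[of True M N q, THEN iffD1, OF g'(2)] .
  have "\<forall>i < length q - 1. {q ! i, q ! Suc i} \<in> G \<and> ({q ! i, q ! Suc i} \<in> M \<longleftrightarrow> odd i)"
  proof (intro allI impI)
    fix i assume "i < length q - 1"
    then have "Suc i < length q" by simp
    then have "(if True = even i then {q!i, q!Suc i} \<in> N - M else {q!i, q!Suc i} \<in> M - N)"
      by (rule all[rule_format])
    then show "{q ! i, q ! Suc i} \<in> G \<and> ({q ! i, q ! Suc i} \<in> M \<longleftrightarrow> odd i)"
      using G by (cases "even i") auto
  qed
  then show ?thesis unfolding augmenting_path_def using g' by blast
qed

lemma aug_edges: "augmenting_path G M p \<Longrightarrow> path_edges p \<subseteq> G"
proof
  fix e assume a: "augmenting_path G M p" "e \<in> path_edges p"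
  have "\<exists>i. Suc i < length p \<and> e = {p!i, p!Suc i}" using iffD1[OF pe_nth a(2)] .
  then obtain i where i: "Suc i < length p" "e = {p!i, p!Suc i}" by blast
  have all: "\<forall>i < length p - 1. {p ! i, p ! Suc i} \<in> G \<and> ({p ! i, p ! Suc i} \<in> M \<longleftrightarrow> odd i)"
    using a(1) unfolding augmenting_path_def by simp
  have "i < length p - 1" using i(1) by simp
  then show "e \<in> G" using all i(2) by simp
qed

lemma aug_alt: "augmenting_path G M p \<Longrightarrow> alt True M (M - path_edges p \<union> (path_edges p - M)) p \<and> even (length p)"
proof -
  assume a: "augmenting_path G M p"
  have E: "{p!i, p!Suc i} \<in> path_edges p" if "Suc i < length p" for i using pe_nth that by blast
  have "alt True M (M - path_edges p \<union> (path_edges p - M)) p"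
    unfolding alt_nth
  proof (intro allI impI)
    fix i assume i: "Suc i < length p"
    then have "({p ! i, p ! Suc i} \<in> M) = odd i" using a unfolding augmenting_path_def by auto
    then show "if True = even i then {p ! i, p ! Suc i} \<in> M - path_edges p \<union> (path_edges p - M) - M
          else {p ! i, p ! Suc i} \<in> M - (M - path_edges p \<union> (path_edges p - M))"
      using E[OF i] by auto
  qed
  moreover have "even (length p)"
  proof -
    have L: "length p \<ge> 2" "last p \<notin> \<Union>M" using a unfolding augmenting_path_def by auto
    define i where "i = length p - 2"
    have i: "i < length p - 1" "Suc i = length p - 1" using L i_def by auto
    have "p \<noteq> []" using L by auto
    then have "last p = p ! Suc i" using i by (simp add: last_conv_nth)
    then have "{p!i, p!Suc i} \<notin> M" using L by auto
    moreover have "({p!i, p!Suc i} \<in> M) = odd i" using a i(1) unfolding augmenting_path_def by blast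
    ultimately have "even i" by simp
    then show ?thesis using i_def L by auto
  qed
  ultimately show ?thesis by auto
qed

lemma augment:
  assumes "matching M" "finite M" "augmenting_path G M p"
  shows "matching (M - path_edges p \<union> (path_edges p - M)) \<and> card (M - path_edges p \<union> (path_edges p - M)) = card M + 1"
proof -
  define N where "N = M - path_edges p \<union> (path_edges p - M)"
  have al: "alt True M N p" and ev: "even (length p)" using aug_alt[OF assms(3)] N_def by auto
  have ap: "distinct p" "length p \<ge> 2" "hd p \<notin> \<Union>M" "last p \<notin> \<Union>M" using assms(3) unfolding augmenting_path_def by auto
  have "matching N" unfolding matching_def
  proof (intro ballI impI)
    fix f g assume fg: "f \<in> N" "g \<in> N" "f \<noteq> g"
    show "f \<inter> g = {}"
    proof (rule ccontr)
      assume "f \<inter> g \<noteq> {}"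
      then obtain x where x: "x \<in> f" "x \<in> g" by auto
      have mixed: False if f: "f \<in> M - path_edges p" and g: "g \<in> path_edges p - M" and x: "x \<in> f" "x \<in> g" for f g
      proof -
        have "x \<in> set p" using pe_sub g x by auto
        show False
        proof (cases "x = hd p \<or> x = last p")
          case True then show False using ap(3,4) f x by blast
        next
          case False
          then obtain h where h: "h \<in> path_edges p" "h \<in> M - N" "x \<in> h"
            using alt_interior[OF al \<open>x \<in> set p\<close>] by auto
          then have "f = h" using match_eq[OF assms(1), of f h x] f x by blast
          then show False using f h by auto
        qed
      qed
      consider "f \<in> M - path_edges p" "g \<in> M - path_edges p" | "f \<in> M - path_edges p" "g \<in> path_edges p - M"
        | "g \<in> M - path_edges p" "f \<in> path_edges p - M" | "f \<in> path_edges p - M" "g \<in> path_edges p - M"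
        using fg N_def by blast
      then show False
      proof cases
        case 1
        have "f = g" by (rule match_eq[OF assms(1), of f g x]) (use 1 x in auto)
        then show ?thesis using fg(3) by simp
      next
        case 2 then show ?thesis using mixed[of f g] x by blast
      next
        case 3 then show ?thesis using mixed[of g f] x by blast
      next
        case 4
        have "f \<in> path_edges p" "g \<in> path_edges p" "f \<notin> M" "g \<notin> M" using 4 by auto
        then show ?thesis using alt_vertex[OF ap(1) al, of f g x] x fg(3) by blast
      qed
    qed
  qed
  moreover have "card N = card M + 1"
  proof -
    have c: "card (path_edges p \<inter> (N - M)) = length p div 2" "card (path_edges p \<inter> (M - N)) = (length p - 1) div 2"
      using alt_count[OF ap(1) al] by auto
    have e1: "path_edges p \<inter> (N - M) = path_edges p - M" using N_def by auto
    have e2: "path_edges p \<inter> (M - N) = M \<inter> path_edges p" using N_def by auto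
    have fin: "finite (path_edges p)" by (rule finite_pe)
    have "card N = card (M - path_edges p) + card (path_edges p - M)"
      unfolding N_def by (rule card_Un_disjoint) (use assms(2) fin in auto)
    also have "card (M - path_edges p) = card M - card (M \<inter> path_edges p)"
      by (rule card_Diff_subset_Int) (use fin in auto)
    finally have "card N = card M - card (M \<inter> path_edges p) + card (path_edges p - M)" .
    moreover have "card (M \<inter> path_edges p) \<le> card M" by (rule card_mono) (use assms(2) in auto)
    moreover have "length p div 2 = (length p - 1) div 2 + 1" using ev ap(2) by (elim evenE) auto
    moreover have "card (path_edges p - M) = length p div 2" using c(1) e1 by simp
    moreover have "card (M \<inter> path_edges p) = (length p - 1) div 2" using c(2) e2 by simp
    ultimately show ?thesis by linarith
  qed
  ultimately show ?thesis unfolding N_def by auto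
qed



lemma twoset_obtain: "twoset m \<Longrightarrow> v \<in> m \<Longrightarrow> \<exists>w. m = {v,w} \<and> w \<noteq> v"
  unfolding twoset_def by auto

lemma extend:
  assumes M: "matching M" and N: "matching N" and tw: "\<forall>e\<in>M\<union>N. twoset e" and V: "finite V" "\<Union>(M\<union>N) \<subseteq> V"
    and u: "u \<notin> \<Union>M"
  shows "distinct rp \<Longrightarrow> alt c M N rp \<Longrightarrow> 2 \<le> length rp \<Longrightarrow> last rp = u \<Longrightarrow>
    (\<exists>e\<in>path_edges rp. e \<in> N \<and> u \<in> e) \<Longrightarrow> (c = even (length rp)) \<Longrightarrow> set rp \<subseteq> V \<Longrightarrow>
    \<exists>rp' c'. distinct rp' \<and> alt c' M N rp' \<and> 2 \<le> length rp' \<and> last rp' = u \<and>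
      (\<exists>e\<in>path_edges rp'. e \<in> N \<and> u \<in> e) \<and> (c' = even (length rp')) \<and>
      ((c' \<and> hd rp' \<notin> \<Union>M) \<or> (\<not>c' \<and> hd rp' \<notin> \<Union>N))"
proof (induction "card (V - set rp)" arbitrary: rp c rule: less_induct)
  case less
  obtain v y ys where rp: "rp = v # y # ys" using len2[OF less.prems(3)] by blast
  show ?case
  proof (cases "(c \<and> v \<notin> \<Union>M) \<or> (\<not>c \<and> v \<notin> \<Union>N)")
    case True then show ?thesis using less.prems rp by (intro exI[of _ rp] exI[of _ c]) auto
  next
    case False
    have first: "if c then {v,y} \<in> N - M else {v,y} \<in> M - N" using less.prems(2) rp by auto
    have "\<exists>w. (if c then {v,w} \<in> M - N else {v,w} \<in> N - M) \<and> w \<notin> set rp \<and> w \<in> V"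
    proof (cases c)
      case True
      then obtain m where m: "m \<in> M" "v \<in> m" using False by auto
      have "twoset m" using tw m by blast
      then obtain w where w: "m = {v,w}" "w \<noteq> v" using twoset_obtain[of m v] m by blast
      have vy: "{v,y} \<in> N" "{v,y} \<notin> M" using first True by auto
      have mN: "m \<notin> N"
      proof
        assume "m \<in> N"
        then have "m = {v,y}" using match_eq[OF N, of m "{v,y}" v] vy m by auto
        then show False using vy m by auto
      qed
      have wV: "w \<in> V" using V m w by auto
      have "w \<notin> set rp"
      proof
        assume wr: "w \<in> set rp"
        have "w \<noteq> hd rp" using rp w by auto
        moreover have "w \<noteq> last rp" using less.prems(4) u m w by auto
        ultimately obtain h where h: "h \<in> path_edges rp" "h \<in> M - N" "w \<in> h"
          using alt_interior[OF less.prems(2) wr] by blast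
        then have "h = m" using match_eq[OF M, of h m w] m w by auto
        then have "m = {v,y}" using pe_first[of v y ys m] less.prems(1) rp h w by auto
        then show False using vy m by auto
      qed
      then show ?thesis using True m w mN wV by (intro exI[of _ w]) auto
    next
      case c: False
      then obtain m where m: "m \<in> N" "v \<in> m" using False by auto
      have "twoset m" using tw m by blast
      then obtain w where w: "m = {v,w}" "w \<noteq> v" using twoset_obtain[of m v] m by blast
      have vy: "{v,y} \<in> M" "{v,y} \<notin> N" using first c by auto
      have mM: "m \<notin> M"
      proof
        assume "m \<in> M"
        then have "m = {v,y}" using match_eq[OF M, of m "{v,y}" v] vy m by auto
        then show False using vy m by auto
      qed
      have wV: "w \<in> V" using V m w by auto
      have "w \<notin> set rp"
      proof
        assume wr: "w \<in> set rp"
        have "w \<noteq> hd rp" using rp w by auto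
        have "\<exists>h\<in>path_edges rp. h \<in> N \<and> w \<in> h"
        proof (cases "w = last rp")
          case True then show ?thesis using less.prems(4,5) by auto
        next
          case False
          then show ?thesis using alt_interior[OF less.prems(2) wr \<open>w \<noteq> hd rp\<close>] by blast
        qed
        then obtain h where h: "h \<in> path_edges rp" "h \<in> N" "w \<in> h" by blast
        then have "h = m" using match_eq[OF N, of h m w] m w by auto
        then have "m = {v,y}" using pe_first[of v y ys m] less.prems(1) rp h w by auto
        then show False using vy m by auto
      qed
      then show ?thesis using c m w mM wV by (intro exI[of _ w]) auto
    qed
    then obtain w where wall: "(if c then {v,w} \<in> M - N else {v,w} \<in> N - M) \<and> w \<notin> set rp \<and> w \<in> V" ..
    note w = conjunct1[OF wall] conjunct1[OF conjunct2[OF wall]] conjunct2[OF conjunct2[OF wall]]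
    define rp' where "rp' = w # rp"
    have lt: "card (V - set rp') < card (V - set rp)"
    proof -
      have "V - set rp' = (V - set rp) - {w}" unfolding rp'_def by auto
      moreover have "w \<in> V - set rp" using w by auto
      moreover have "card ((V - set rp) - {w}) < card (V - set rp)"
        by (rule card_Diff1_less) (use V(1) \<open>w \<in> V - set rp\<close> in auto)
      ultimately show ?thesis by simp
    qed
    have ins: "{w,v} = {v,w}" by auto
    have a1: "distinct rp'" using less.prems(1) w rp'_def by auto
    have a2: "alt (\<not>c) M N rp'" using less.prems(2) w rp rp'_def ins by (auto split: if_splits)
    have a3: "2 \<le> length rp'" "last rp' = u" using less.prems(3,4) rp rp'_def by auto
    have a4: "\<exists>e\<in>path_edges rp'. e \<in> N \<and> u \<in> e" using less.prems(5) rp rp'_def by auto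
    have a5: "(\<not>c) = even (length rp')" using less.prems(6) rp'_def by auto
    have a6: "set rp' \<subseteq> V" using less.prems(7) w rp'_def by auto
    show ?thesis using less.hyps[OF lt a1 a2 a3 a4 a5 a6] .
  qed
qed

lemma isolate:
  assumes M: "matching M" and N: "matching N" and d: "distinct rp" and al: "alt c M N rp" and l: "2 \<le> length rp"
    and lu: "last rp \<notin> \<Union>M" and le: "\<exists>e\<in>path_edges rp. e \<in> N \<and> last rp \<in> e"
    and hd: "(c \<and> hd rp \<notin> \<Union>M) \<or> (\<not>c \<and> hd rp \<notin> \<Union>N)"
    and x: "x \<in> set rp" and e: "e \<in> (M - N) \<union> (N - M)" "x \<in> e"
  shows "e \<in> path_edges rp"
proof -
  obtain v y ys where rp: "rp = v # y # ys" using len2[OF l] by blast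
  have first: "if c then {v,y} \<in> N - M else {v,y} \<in> M - N" using al rp by auto
  have fe: "{v,y} \<in> path_edges rp" using rp by auto
  show ?thesis
  proof (cases "x = v")
    case True
    show ?thesis
    proof (cases c)
      case True
      then have "e \<in> N" "{v,y} \<in> N" using hd e first rp \<open>x = v\<close> by auto
      then have "e = {v,y}" using match_eq[OF N, of e "{v,y}" x] e \<open>x = v\<close> by auto
      then show ?thesis using fe by simp
    next
      case False
      then have "e \<in> M" "{v,y} \<in> M" using hd e first rp \<open>x = v\<close> by auto
      then have "e = {v,y}" using match_eq[OF M, of e "{v,y}" x] e \<open>x = v\<close> by auto
      then show ?thesis using fe by simp
    qed
  next
    case xv: False
    show ?thesis
    proof (cases "x = last rp")
      case True
      then have "e \<in> N" using lu e by auto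
      obtain h where "h \<in> path_edges rp" "h \<in> N" "last rp \<in> h" using le by blast
      then have "e = h" using match_eq[OF N, of e h x] e True \<open>e \<in> N\<close> by auto
      then show ?thesis using \<open>h \<in> path_edges rp\<close> by simp
    next
      case False
      have "x \<noteq> hd rp" using xv rp by simp
      from alt_interior[OF al x this False] obtain h1 h2 where
        h: "h1 \<in> path_edges rp" "h1 \<in> M - N" "x \<in> h1" "h2 \<in> path_edges rp" "h2 \<in> N - M" "x \<in> h2" by blast
      show ?thesis
      proof (cases "e \<in> M")
        case True
        then have "e = h1" using match_eq[OF M, of e h1 x] e h by auto
        then show ?thesis using h by simp
      next
        case False
        then have "e \<in> N" using e by auto
        then have "e = h2" using match_eq[OF N, of e h2 x] e h by auto
        then show ?thesis using h by simp
      qed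
    qed
  qed
qed

lemma card_Union_match: "matching X \<Longrightarrow> finite X \<Longrightarrow> \<forall>e\<in>X. twoset e \<Longrightarrow> card (\<Union>X) = 2 * card X"
proof -
  assume a: "matching X" "finite X" "\<forall>e\<in>X. twoset e"
  have "card (\<Union>X) = sum card X"
    by (rule card_Union_disjoint) (use a in \<open>auto simp: pairwise_def disjnt_def matching_def twoset_def\<close>)
  also have "\<dots> = sum (\<lambda>_. 2) X" using a(3) by (intro sum.cong) (auto simp: twoset_def)
  finally show ?thesis by simp
qed

lemma card_split: "finite S \<Longrightarrow> E \<subseteq> S \<Longrightarrow> card (S \<inter> X) = card (E \<inter> X) + card ((S - E) \<inter> X)"
proof -
  assume a: "finite S" "E \<subseteq> S"
  have eq: "S \<inter> X = (E \<inter> X) \<union> ((S - E) \<inter> X)" using a by auto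
  have f: "finite (E \<inter> X)" "finite ((S - E) \<inter> X)" using a finite_subset by auto
  have "card ((E \<inter> X) \<union> ((S - E) \<inter> X)) = card (E \<inter> X) + card ((S - E) \<inter> X)"
    by (rule card_Un_disjoint[OF f]) blast
  then show ?thesis by (simp only: eq)
qed



lemma ends_in_edge: "2 \<le> length q \<Longrightarrow> (\<exists>e\<in>path_edges q. hd q \<in> e) \<and> (\<exists>e\<in>path_edges q. last q \<in> e)"
proof -
  assume l: "2 \<le> length q"
  obtain a b qs where q: "q = a # b # qs" using len2[OF l] by blast
  have 1: "\<exists>e\<in>path_edges q. hd q \<in> e" using q by auto
  define i where "i = length q - 2"
  have i: "Suc i < length q" "Suc i = length q - 1" using l i_def by auto
  have "q \<noteq> []" using q by auto
  then have "last q = q ! Suc i" using i by (simp add: last_conv_nth)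
  moreover have "{q!i, q!Suc i} \<in> path_edges q" by (rule iffD2[OF pe_nth]) (use i(1) in blast)
  ultimately have 2: "\<exists>e\<in>path_edges q. last q \<in> e" by auto
  show ?thesis using 1 2 by blast
qed

lemma decomp:
  "finite (M \<union> N) \<Longrightarrow> matching M \<Longrightarrow> matching N \<Longrightarrow> \<forall>e\<in>M\<union>N. twoset e \<Longrightarrow>
   \<exists>ps. (\<forall>q\<in>set ps. good M N q) \<and> int (card (N - M)) - int (card (M - N)) \<le> int (length ps) \<and>
     (\<forall>X. (\<Sum>q\<leftarrow>ps. card (path_edges q \<inter> X)) \<le> card (((M - N) \<union> (N - M)) \<inter> X))"
proof (induction "card (M \<union> N)" arbitrary: M N rule: less_induct)
  case less
  have finM: "finite M" "finite N" using less.prems(1) by auto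
  have fin2: "\<forall>e\<in>M\<union>N. finite e"
  proof
    fix e assume "e \<in> M \<union> N"
    then obtain x y where "e = {x,y}" using less.prems(4) unfolding twoset_def by blast
    then show "finite e" by simp
  qed
  show ?case
  proof (cases "\<exists>u f. f \<in> N - M \<and> u \<in> f \<and> u \<notin> \<Union>M")
    case False
    have sub: "\<Union>(N-M) \<subseteq> \<Union>(M-N)"
    proof
      fix u assume "u \<in> \<Union>(N-M)"
      then obtain f where f: "f \<in> N - M" "u \<in> f" by auto
      then obtain m where m: "m \<in> M" "u \<in> m" using False by auto
      have "m \<notin> N"
      proof
        assume "m \<in> N"
        then have "m = f" using match_eq[OF less.prems(3), of m f u] f m by auto
        then show False using f m by auto
      qed
      then show "u \<in> \<Union>(M-N)" using m by auto
    qed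
    have "finite (\<Union>(M-N))" using finM fin2 by auto
    then have "card (\<Union>(N-M)) \<le> card (\<Union>(M-N))" using sub by (rule card_mono)
    moreover have "card (\<Union>(N-M)) = 2 * card (N - M)"
      by (rule card_Union_match[OF matching_subset[OF less.prems(3) Diff_subset]]) (use less.prems(4) finM in auto)
    moreover have "card (\<Union>(M-N)) = 2 * card (M - N)"
      by (rule card_Union_match[OF matching_subset[OF less.prems(2) Diff_subset]]) (use less.prems(4) finM in auto)
    ultimately have "card (N - M) \<le> card (M - N)" by simp
    then show ?thesis by (intro exI[of _ "[]"]) auto
  next
    case True
    then obtain u f where uf: "f \<in> N - M" "u \<in> f" "u \<notin> \<Union>M" by blast
    have "twoset f" using less.prems(4) uf(1) by blast
    then obtain b where b: "f = {u,b}" "b \<noteq> u" using twoset_obtain[of f u] uf(2) by blast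
    define V where "V = \<Union>(M\<union>N)"
    have V: "finite V" "\<Union>(M\<union>N) \<subseteq> V" using V_def less.prems(1) fin2 by auto
    have fb: "{b,u} = f" using b by auto
    have "\<exists>rp' c'. distinct rp' \<and> alt c' M N rp' \<and> 2 \<le> length rp' \<and> last rp' = u \<and>
      (\<exists>e\<in>path_edges rp'. e \<in> N \<and> u \<in> e) \<and> (c' = even (length rp')) \<and>
      ((c' \<and> hd rp' \<notin> \<Union>M) \<or> (\<not>c' \<and> hd rp' \<notin> \<Union>N))"
    proof (rule extend[OF less.prems(2,3,4) V uf(3), of "[b,u]" True])
      have "{b,u} \<in> N - M" using fb uf(1) by simp
      then show "alt True M N [b, u]" by simp
      show "\<exists>e\<in>path_edges [b, u]. e \<in> N \<and> u \<in> e" using fb uf(1,2) by simp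
      have "f \<subseteq> V" using V_def uf(1) by blast
      then show "set [b, u] \<subseteq> V" using b by simp
    qed (use b in simp_all)
    then obtain rp c where rp: "distinct rp" "alt c M N rp" "2 \<le> length rp" "last rp = u"
      "\<exists>e\<in>path_edges rp. e \<in> N \<and> u \<in> e" "c = even (length rp)"
      "(c \<and> hd rp \<notin> \<Union>M) \<or> (\<not>c \<and> hd rp \<notin> \<Union>N)"
      by (elim exE conjE) (rule that; assumption)
    define E where "E = path_edges rp"
    define S where "S = (M - N) \<union> (N - M)"
    have finS: "finite S" using finM S_def by auto
    have ES: "E \<subseteq> S" using alt_sub[OF rp(2)] E_def S_def by auto
    have Ene: "E \<noteq> {}" using ends_in_edge[OF rp(3)] E_def by auto
    define M' where "M' = M - E"
    define N' where "N' = N - E"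
    have lt: "card (M' \<union> N') < card (M \<union> N)"
    proof (rule psubset_card_mono)
      show "finite (M \<union> N)" using less.prems(1) .
      have "M' \<union> N' = (M \<union> N) - E" using M'_def N'_def by auto
      moreover have "E \<subseteq> M \<union> N" "E \<noteq> {}" using ES S_def Ene by auto
      ultimately show "M' \<union> N' \<subset> M \<union> N" by blast
    qed
    have pre1: "finite (M' \<union> N')" by (rule finite_subset[OF _ less.prems(1)]) (auto simp: M'_def N'_def)
    have pre2: "matching M'" "matching N'"
      using matching_subset[OF less.prems(2)] matching_subset[OF less.prems(3)] M'_def N'_def by auto
    have pre3: "\<forall>e\<in>M'\<union>N'. twoset e" using less.prems(4) M'_def N'_def by auto
    note pre = pre1 pre2 pre3
    obtain ps' where ps': "\<forall>q\<in>set ps'. good M' N' q"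
      "int (card (N' - M')) - int (card (M' - N')) \<le> int (length ps')"
      "\<forall>X. (\<Sum>q\<leftarrow>ps'. card (path_edges q \<inter> X)) \<le> card (((M' - N') \<union> (N' - M')) \<inter> X)"
      using less.hyps[OF lt pre] by blast
    have S': "(M' - N') \<union> (N' - M') = S - E" using M'_def N'_def S_def by auto
    have lu: "last rp \<notin> \<Union>M" "\<exists>e\<in>path_edges rp. e \<in> N \<and> last rp \<in> e" using rp(4,5) uf(3) by simp_all
    have iso: "e \<in> E" if "x \<in> set rp" "e \<in> S" "x \<in> e" for x e
      unfolding E_def by (rule isolate[OF less.prems(2,3) rp(1,2,3) lu rp(7)]) (use that S_def in simp_all)
    have lift: "good M N q" if q: "good M' N' q" for q
    proof -
      have gq: "distinct q" "alt True M' N' q" "even (length q)" "2 \<le> length q" "hd q \<notin> \<Union>M'" "last q \<notin> \<Union>M'"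
        using q unfolding good_def by auto
      have alq: "alt True M N q" by (rule alt_mono[OF gq(2)]) (use M'_def N'_def in auto)
      have pq: "path_edges q \<subseteq> S - E" using alt_sub[OF gq(2)] S' by auto
      have endp: "z \<notin> \<Union>M" if "z \<in> e0" "e0 \<in> path_edges q" "z \<notin> \<Union>M'" for z e0
      proof
        assume "z \<in> \<Union>M"
        then obtain m where m: "m \<in> M" "z \<in> m" by auto
        show False
        proof (cases "m \<in> E")
          case True
          then have "m \<subseteq> set rp" using pe_sub[of m rp] E_def by simp
          then have "z \<in> set rp" using m(2) by blast
          moreover have "e0 \<in> S" using that(2) pq by blast
          ultimately have "e0 \<in> E" using iso[of z e0] that(1) by blast
          then show False using that(2) pq by blast
        next
          case False
          then show False using m that M'_def by auto
        qed
      qed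
      obtain e1 e2 where ee: "e1 \<in> path_edges q" "hd q \<in> e1" "e2 \<in> path_edges q" "last q \<in> e2"
        using ends_in_edge[OF gq(4)] by blast
      have "hd q \<notin> \<Union>M" by (rule endp[OF ee(2) ee(1) gq(5)])
      moreover have "last q \<notin> \<Union>M" by (rule endp[OF ee(4) ee(3) gq(6)])
      ultimately show ?thesis using gq alq unfolding good_def by auto
    qed
    have cnt: "card (path_edges rp \<inter> (N - M)) = (if c then length rp div 2 else (length rp - 1) div 2)"
      "card (path_edges rp \<inter> (M - N)) = (if c then (length rp - 1) div 2 else length rp div 2)"
      using alt_count[OF rp(1,2)] by auto
    have d1: "int (card (N' - M')) = int (card (N - M)) - int (card (E \<inter> (N - M)))"
    proof -
      have "N' - M' = (N - M) - E" using M'_def N'_def by auto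
      then have "card (N' - M') = card (N - M) - card ((N - M) \<inter> E)"
        using card_Diff_subset_Int[of "N - M" E] finM by auto
      moreover have "card ((N - M) \<inter> E) \<le> card (N - M)" by (rule card_mono) (use finM in auto)
      ultimately show ?thesis by (simp add: Int_commute of_nat_diff)
    qed
    have d2: "int (card (M' - N')) = int (card (M - N)) - int (card (E \<inter> (M - N)))"
    proof -
      have "M' - N' = (M - N) - E" using M'_def N'_def by auto
      then have "card (M' - N') = card (M - N) - card ((M - N) \<inter> E)"
        using card_Diff_subset_Int[of "M - N" E] finM by auto
      moreover have "card ((M - N) \<inter> E) \<le> card (M - N)" by (rule card_mono) (use finM in auto)
      ultimately show ?thesis by (simp add: Int_commute of_nat_diff)
    qed
    have sumX: "card (E \<inter> X) + card (((M' - N') \<union> (N' - M')) \<inter> X) = card (S \<inter> X)" for X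
      using card_split[OF finS ES, of X] S' by simp
    show ?thesis
    proof (cases c)
      case True
      then have hdM: "hd rp \<notin> \<Union>M" using rp(7) by auto
      have ev: "even (length rp)" using True rp(6) by simp
      have grp: "good M N rp" unfolding good_def using rp True hdM ev uf(3) by auto
      have "length rp div 2 = (length rp - 1) div 2 + 1" using ev rp(3) by (elim evenE) auto
      then have "int (card (E \<inter> (N - M))) = int (card (E \<inter> (M - N))) + 1" using cnt True E_def by simp
      then have len: "int (card (N - M)) - int (card (M - N)) \<le> int (length (rp # ps'))"
        using ps'(2) d1 d2 by simp
      have "(\<Sum>q\<leftarrow>rp # ps'. card (path_edges q \<inter> X)) \<le> card (S \<inter> X)" for X
      proof -
        have "(\<Sum>q\<leftarrow>ps'. card (path_edges q \<inter> X)) \<le> card (((M' - N') \<union> (N' - M')) \<inter> X)"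
          using ps'(3) by blast
        then show ?thesis using sumX[of X] unfolding E_def by simp
      qed
      then show ?thesis using grp lift ps'(1) len S_def by (intro exI[of _ "rp # ps'"]) auto
    next
      case False
      have ev: "odd (length rp)" using False rp(6) by simp
      have "length rp div 2 = (length rp - 1) div 2" using ev rp(3) by (elim oddE) auto
      then have "int (card (E \<inter> (N - M))) = int (card (E \<inter> (M - N)))" using cnt False E_def by simp
      then have len: "int (card (N - M)) - int (card (M - N)) \<le> int (length ps')"
        using ps'(2) d1 d2 by simp
      have "(\<Sum>q\<leftarrow>ps'. card (path_edges q \<inter> X)) \<le> card (S \<inter> X)" for X
      proof -
        have "(\<Sum>q\<leftarrow>ps'. card (path_edges q \<inter> X)) \<le> card (((M' - N') \<union> (N' - M')) \<inter> X)"
          using ps'(3) by blast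
        then show ?thesis using sumX[of X] by linarith
      qed
      then show ?thesis using lift ps'(1) len S_def by (intro exI[of _ "ps'"]) auto
    qed
  qed
qed



lemma card_diff_int: "finite M \<Longrightarrow> finite N \<Longrightarrow>
   int (card (N - M)) - int (card (M - N)) = int (card N) - int (card M)"
proof -
  assume f: "finite M" "finite N"
  have a: "card (N - M) = card N - card (N \<inter> M)" using card_Diff_subset_Int[of N M] f by simp
  have b: "card (M - N) = card M - card (M \<inter> N)" using card_Diff_subset_Int[of M N] f by simp
  have c: "card (N \<inter> M) \<le> card N" "card (M \<inter> N) \<le> card M" using f by (simp_all add: card_mono)
  have d: "N \<inter> M = M \<inter> N" by blast
  show ?thesis using a b c d by (simp add: of_nat_diff)
qed

lemma aug_old: "augmenting_path (insert e G) M q \<Longrightarrow> e \<notin> path_edges q \<Longrightarrow> augmenting_path G M q"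
proof -
  assume a: "augmenting_path (insert e G) M q" "e \<notin> path_edges q"
  have all: "\<forall>i < length q - 1. {q ! i, q ! Suc i} \<in> insert e G \<and> ({q ! i, q ! Suc i} \<in> M \<longleftrightarrow> odd i)"
    using a(1) unfolding augmenting_path_def by simp
  have "\<forall>i < length q - 1. {q ! i, q ! Suc i} \<in> G \<and> ({q ! i, q ! Suc i} \<in> M \<longleftrightarrow> odd i)"
  proof (intro allI impI)
    fix i assume i: "i < length q - 1"
    have "{q ! i, q ! Suc i} \<in> path_edges q"
      by (rule iffD2[OF pe_nth], rule exI[of _ i]) (use i in auto)
    then have "{q ! i, q ! Suc i} \<noteq> e" using a(2) by blast
    moreover have "{q ! i, q ! Suc i} \<in> insert e G \<and> ({q ! i, q ! Suc i} \<in> M \<longleftrightarrow> odd i)"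
      using all i by blast
    ultimately show "{q ! i, q ! Suc i} \<in> G \<and> ({q ! i, q ! Suc i} \<in> M \<longleftrightarrow> odd i)" by blast
  qed
  then show ?thesis using a(1) unfolding augmenting_path_def by simp
qed

lemma step_inv:
  assumes fin: "finite G0" and tw: "\<forall>x\<in>insert e G0. twoset x"
    and mi: "matching_in G0 M" and inv0: "\<forall>p. augmenting_path G0 M p \<longrightarrow> k - 1 < path_len p"
    and st: "alg_step k (insert e G0) M e M'" and k: "k \<ge> 2"
  shows "matching_in (insert e G0) M' \<and> (\<forall>p. augmenting_path (insert e G0) M' p \<longrightarrow> k - 1 < path_len p)"
proof -
  define G where "G = insert e G0"
  define P where "P = {p. augmenting_path G M p \<and> e \<in> path_edges p}"
  have finG: "finite G" using fin G_def by simp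
  have MG: "M \<subseteq> G" "matching M" using mi G_def unfolding matching_in_def by auto
  have finM: "finite M" using MG finG finite_subset by blast
  have st': "((\<forall>p\<in>P. path_len p > k - 1) \<and> M' = M)
       \<or> (\<exists>p\<in>P. (\<forall>q\<in>P. path_len p \<le> path_len q) \<and> path_len p \<le> k - 1
               \<and> M' = M - path_edges p \<union> (path_edges p - M))"
    using st unfolding alg_step_def Let_def P_def G_def by simp
  have old: "k - 1 < path_len q" if "augmenting_path G M q" "e \<notin> path_edges q" for q
    using inv0 aug_old[of e G0 M q] that G_def by blast
  show ?thesis
  proof (cases "(\<forall>p\<in>P. path_len p > k - 1) \<and> M' = M")
    case True
    have "\<forall>p. augmenting_path G M' p \<longrightarrow> k - 1 < path_len p"
    proof (intro allI impI)
      fix q assume q: "augmenting_path G M' q"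
      show "k - 1 < path_len q"
      proof (cases "e \<in> path_edges q")
        case True
        then have "q \<in> P" using q \<open>(\<forall>p\<in>P. path_len p > k - 1) \<and> M' = M\<close> P_def by simp
        then show ?thesis using \<open>(\<forall>p\<in>P. path_len p > k - 1) \<and> M' = M\<close> by blast
      next
        case False
        then show ?thesis using old[of q] q True by simp
      qed
    qed
    moreover have "matching_in G M'" using True MG unfolding matching_in_def by simp
    ultimately show ?thesis using G_def by simp
  next
    case False
    then obtain P0 where P0: "P0 \<in> P" "\<forall>q\<in>P. path_len P0 \<le> path_len q" "path_len P0 \<le> k - 1"
      "M' = M - path_edges P0 \<union> (path_edges P0 - M)" using st' by blast
    have augP: "augmenting_path G M P0" "e \<in> path_edges P0" using P0(1) P_def by auto
    have M'prop: "matching M' \<and> card M' = card M + 1" using augment[OF MG(2) finM augP(1)] P0(4) by simp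
    have M'G: "M' \<subseteq> G" using P0(4) MG(1) aug_edges[OF augP(1)] by blast
    have finM': "finite M'" using M'G finG finite_subset by blast
    have "\<forall>p. augmenting_path G M' p \<longrightarrow> k - 1 < path_len p"
    proof (intro allI impI)
      fix Q assume Q: "augmenting_path G M' Q"
      show "k - 1 < path_len Q"
      proof (rule ccontr)
        assume nQ: "\<not> k - 1 < path_len Q"
        define M'' where "M'' = M' - path_edges Q \<union> (path_edges Q - M')"
        have M''prop: "matching M'' \<and> card M'' = card M' + 1" using augment[OF _ finM' Q] M'prop M''_def by simp
        have M''G: "M'' \<subseteq> G" using M''_def M'G aug_edges[OF Q] by blast
        have finM'': "finite M''" using M''G finG finite_subset by blast
        have twMM: "\<forall>x\<in>M \<union> M''. twoset x" using tw MG(1) M''G G_def by blast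
        have finU: "finite (M \<union> M'')" using finM finM'' by simp
        obtain ps where ps: "\<forall>q\<in>set ps. good M M'' q"
          "int (card (M'' - M)) - int (card (M - M'')) \<le> int (length ps)"
          "\<forall>X. (\<Sum>q\<leftarrow>ps. card (path_edges q \<inter> X)) \<le> card (((M - M'') \<union> (M'' - M)) \<inter> X)"
          using decomp[OF finU MG(2) conjunct1[OF M''prop] twMM] by blast
        have "int (length ps) \<ge> 2" using ps(2) card_diff_int[OF finM finM''] M''prop M'prop by simp
        then have "2 \<le> length ps" by simp
        then obtain q1 q2 rest where ps12: "ps = q1 # q2 # rest" using len2 by blast
        have MM''G: "M \<union> M'' \<subseteq> G" using MG(1) M''G by blast
        have aq1: "augmenting_path G M q1" using good_aug[OF _ MM''G] ps(1) ps12 by simp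
        have aq2: "augmenting_path G M q2" using good_aug[OF _ MM''G] ps(1) ps12 by simp
        have sumge: "f q1 + f q2 \<le> (\<Sum>q\<leftarrow>ps. f q)" for f :: "'a list \<Rightarrow> nat" using ps12 by simp
        have se: "card (path_edges q1 \<inter> {e}) + card (path_edges q2 \<inter> {e}) \<le> card (((M - M'') \<union> (M'' - M)) \<inter> {e})"
          using sumge[of "\<lambda>q. card (path_edges q \<inter> {e})"] ps(3) by (meson le_trans)
        have "card (((M - M'') \<union> (M'' - M)) \<inter> {e}) \<le> card {e}" by (rule card_mono) auto
        then have se1: "card (path_edges q1 \<inter> {e}) + card (path_edges q2 \<inter> {e}) \<le> 1" using se by simp
        have noe: "e \<notin> path_edges q1 \<or> e \<notin> path_edges q2"
        proof (rule ccontr)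
          assume "\<not> (e \<notin> path_edges q1 \<or> e \<notin> path_edges q2)"
          then have "path_edges q1 \<inter> {e} = {e}" "path_edges q2 \<inter> {e} = {e}" by auto
          then show False using se1 by simp
        qed
        have su: "card (path_edges q1 \<inter> UNIV) + card (path_edges q2 \<inter> UNIV) \<le> card (((M - M'') \<union> (M'' - M)) \<inter> UNIV)"
          using sumge[of "\<lambda>q. card (path_edges q \<inter> UNIV)"] ps(3) by (meson le_trans)
        have sdsub: "(M - M'') \<union> (M'' - M) \<subseteq> path_edges P0 \<union> path_edges Q"
          unfolding M''_def P0(4) by blast
        have "card ((M - M'') \<union> (M'' - M)) \<le> card (path_edges P0 \<union> path_edges Q)"
          by (rule card_mono[OF _ sdsub]) (simp add: finite_pe)
        also have "\<dots> \<le> card (path_edges P0) + card (path_edges Q)" by (rule card_Un_le)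
        finally have sdle: "card ((M - M'') \<union> (M'' - M)) \<le> card (path_edges P0) + card (path_edges Q)" .
        have dP: "distinct P0" using augP(1) unfolding augmenting_path_def by simp
        have dQ: "distinct Q" using Q unfolding augmenting_path_def by simp
        have d1: "distinct q1" using aq1 unfolding augmenting_path_def by simp
        have d2: "distinct q2" using aq2 unfolding augmenting_path_def by simp
        have cP: "card (path_edges P0) = path_len P0" unfolding path_len_def using card_pe[OF dP] by simp
        have cQ: "card (path_edges Q) = path_len Q" unfolding path_len_def using card_pe[OF dQ] by simp
        have c1: "card (path_edges q1) = path_len q1" unfolding path_len_def using card_pe[OF d1] by simp
        have c2: "card (path_edges q2) = path_len q2" unfolding path_len_def using card_pe[OF d2] by simp
        have lb: "path_len P0 \<le> path_len q" if "augmenting_path G M q" for q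
        proof (cases "e \<in> path_edges q")
          case True
          then have "q \<in> P" using that P_def by simp
          then show ?thesis using P0(2) by blast
        next
          case False
          then have "k - 1 < path_len q" using old that by blast
          then show ?thesis using P0(3) by simp
        qed
        have "k + path_len P0 \<le> path_len q1 + path_len q2"
        proof (cases "e \<notin> path_edges q1")
          case True
          then have "k - 1 < path_len q1" using old aq1 by blast
          then show ?thesis using lb[OF aq2] k by simp
        next
          case False
          then have "e \<notin> path_edges q2" using noe by blast
          then have "k - 1 < path_len q2" using old aq2 by blast
          then show ?thesis using lb[OF aq1] k by simp
        qed
        then show False using su sdle cP cQ c1 c2 nQ k by simp
      qed
    qed
    moreover have "matching_in G M'" using M'prop M'G unfolding matching_in_def by simp
    ultimately show ?thesis using G_def by simp
  qed
qed

lemma run_inv: "alg_run k es M \<Longrightarrow> k \<ge> 2 \<Longrightarrow> \<forall>x\<in>set es. twoset x \<Longrightarrow>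
   matching_in (set es) M \<and> (\<forall>p. augmenting_path (set es) M p \<longrightarrow> k - 1 < path_len p)"
proof (induction rule: alg_run.induct)
  case (init k)
  have "\<not> augmenting_path {} {} p" for p :: "'a list"
  proof
    assume a: "augmenting_path {} {} p"
    have h: "\<forall>i. \<not> i < length p - Suc 0" "2 \<le> length p" using a unfolding augmenting_path_def by simp_all
    from h(1) have "\<not> 0 < length p - Suc 0" by blast
    then show False using h(2) by linarith
  qed
  moreover have "matching_in {} ({} :: 'a set set)" unfolding matching_in_def matching_def by simp
  ultimately show ?case by simp
next
  case (step k es M e M')
  have se: "set (es @ [e]) = insert e (set es)" by simp
  have tw: "\<forall>x\<in>insert e (set es). twoset x" using step.prems(2) se by simp
  have IH: "matching_in (set es) M \<and> (\<forall>p. augmenting_path (set es) M p \<longrightarrow> k - 1 < path_len p)"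
    using step.IH step.prems tw by simp
  have "matching_in (insert e (set es)) M' \<and> (\<forall>p. augmenting_path (insert e (set es)) M' p \<longrightarrow> k - 1 < path_len p)"
    by (rule step_inv[OF _ tw conjunct1[OF IH] conjunct2[OF IH] _ step.prems(1)]) (use step.hyps(2) se in simp_all)
  then show ?case using se by simp
qed



lemma sum_list_lower: "\<forall>q\<in>set ps. a \<le> f q \<Longrightarrow> length ps * a \<le> (\<Sum>q\<leftarrow>ps. f q)"
  for f :: "'b \<Rightarrow> nat"
  by (induction ps) auto

theorem theorem5:
  fixes V :: "'a set" and es :: "'a set list" and k :: nat and M :: "'a set set"
  assumes "k \<ge> 2" and "even k"
    and "finite V"
    and "distinct es"
    and "\<forall>e\<in>set es. \<exists>u v. e = {u, v} \<and> u \<noteq> v \<and> u \<in> V \<and> v \<in> V"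
    and "alg_run k es M"
  shows "real (card M) \<ge> (1 - 2 / (real k + 2)) * real (OPT (set es))"
proof -
  define G where "G = set es"
  have tw: "\<forall>x\<in>set es. twoset x" using assms(5) unfolding twoset_def by blast
  have inv: "matching_in G M \<and> (\<forall>p. augmenting_path G M p \<longrightarrow> k - 1 < path_len p)"
    using run_inv[OF assms(6) assms(1) tw] G_def by simp
  have finG: "finite G" using G_def by simp
  have MG: "M \<subseteq> G" "matching M" using inv unfolding matching_in_def by auto
  have finM: "finite M" using MG(1) finG finite_subset by blast
  define S where "S = {card N | N. matching_in G N}"
  have Sfin: "finite S"
  proof -
    have "S \<subseteq> card ` Pow G"
    proof
      fix x assume "x \<in> S"
      then obtain N' where "x = card N'" "matching_in G N'" unfolding S_def by (simp only: mem_Collect_eq) (elim exE conjE)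
      then show "x \<in> card ` Pow G" unfolding matching_in_def by simp
    qed
    then show ?thesis using finG finite_subset by blast
  qed
  have "matching_in G ({}::'a set set)" unfolding matching_in_def matching_def by simp
  then have "card ({}::'a set set) \<in> S" unfolding S_def by blast
  then have Sne: "S \<noteq> {}" by blast
  have "OPT G \<in> S" unfolding OPT_def S_def[symmetric] using Max_in[OF Sfin Sne] .
  then have "\<exists>N. OPT G = card N \<and> matching_in G N" unfolding S_def by (simp only: mem_Collect_eq)
  then obtain N where N: "matching_in G N" "OPT G = card N" by (elim exE conjE) (rule that)
  have NG: "N \<subseteq> G" "matching N" using N(1) unfolding matching_in_def by auto
  have finN: "finite N" using NG(1) finG finite_subset by blast
  have finU: "finite (M \<union> N)" using finM finN by simp
  have twU: "\<forall>x\<in>M \<union> N. twoset x" using tw MG(1) NG(1) G_def by blast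
  obtain ps where ps: "\<forall>q\<in>set ps. good M N q"
    "int (card (N - M)) - int (card (M - N)) \<le> int (length ps)"
    "\<forall>X. (\<Sum>q\<leftarrow>ps. card (path_edges q \<inter> X)) \<le> card (((M - N) \<union> (N - M)) \<inter> X)"
    using decomp[OF finU MG(2) NG(2) twU] by blast
  have MNG: "M \<union> N \<subseteq> G" using MG(1) NG(1) by blast
  have each: "k div 2 \<le> card (path_edges q \<inter> (M - N))" if q: "q \<in> set ps" for q
  proof -
    have g: "good M N q" using ps(1) q by blast
    have gq: "distinct q" "alt True M N q" "even (length q)" using g unfolding good_def by auto
    have "augmenting_path G M q" using good_aug[OF g MNG] .
    then have "k - 1 < path_len q" using inv by blast
    then have "k + 1 \<le> length q" using assms(1) unfolding path_len_def by simp
    moreover have "length q \<noteq> k + 1" using gq(3) assms(2) by auto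
    ultimately have "k + 2 \<le> length q" by simp
    then have "k div 2 \<le> (length q - 1) div 2" using assms(2) by (elim evenE) auto
    moreover have "card (path_edges q \<inter> (M - N)) = (length q - 1) div 2" using alt_count[OF gq(1,2)] by simp
    ultimately show ?thesis by simp
  qed
  have "length ps * (k div 2) \<le> (\<Sum>q\<leftarrow>ps. card (path_edges q \<inter> (M - N)))"
    by (rule sum_list_lower) (use each in blast)
  also have "\<dots> \<le> card (((M - N) \<union> (N - M)) \<inter> (M - N))" using ps(3) by blast
  also have "((M - N) \<union> (N - M)) \<inter> (M - N) = M - N" by blast
  also have "card (M - N) \<le> card M" using finM by (simp add: card_mono)
  finally have A: "length ps * (k div 2) \<le> card M" .
  have B: "int (card N) - int (card M) \<le> int (length ps)" using ps(2) card_diff_int[OF finM finN] by simp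
  have k2: "k = 2 * (k div 2)" using assms(2) by simp
  have C: "(int (card N) - int (card M)) * int (k div 2) \<le> int (card M)"
  proof -
    have "(int (card N) - int (card M)) * int (k div 2) \<le> int (length ps) * int (k div 2)"
      using B by (simp add: mult_right_mono)
    also have "\<dots> \<le> int (card M)" using A by (simp only: of_nat_mult[symmetric] of_nat_le_iff)
    finally show ?thesis .
  qed
  have D: "real k * real (card N) \<le> real (card M) * (real k + 2)"
  proof -
    have "real_of_int ((int (card N) - int (card M)) * int (k div 2)) \<le> real_of_int (int (card M))"
      using C by (simp only: of_int_le_iff)
    then have "(real (card N) - real (card M)) * real (k div 2) \<le> real (card M)" by simp
    moreover have "real k = 2 * real (k div 2)" using k2 by simp
    ultimately show ?thesis by (simp add: algebra_simps)
  qed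
  have E: "1 - 2 / (real k + 2) = real k / (real k + 2)" by (simp add: field_simps)
  have "(1 - 2 / (real k + 2)) * real (card N) = real k * real (card N) / (real k + 2)" using E by simp
  also have "\<dots> \<le> real (card M)" using D by (simp add: divide_le_eq)
  finally show ?thesis using N(2) G_def by simp
qed


end
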